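(* For integers $s_1,s_2>0$ and $r_1,r_2\ge0$ (writing $\binom{a}{b}$ for binomial coefficients and $[\,\cdot\,]$ for bi-brackets, and $B_k$ for Bernoulli numbers with $\frac{X}{e^X-1}=\sum_k\frac{B_k}{k!}X^k$): (i) \begin{align*} \left[\begin{matrix}s_1\\ r_1\end{matrix}\right]\left[\begin{matrix}s_2\\ r_2\end{matrix}\right] =&\left[\begin{matrix}s_1,s_2\\ r_1,r_2\end{matrix}\right]+\left[\begin{matrix}s_2,s_1\\ r_2,r_1\end{matrix}\right]+\binom{r_1+r_2}{r_1}\left[\begin{matrix}s_1+s_2\\ r_1+r_2\end{matrix}\right]\\ &+\binom{r_1+r_2}{r_1}\sum_{j=1}^{s_1}\frac{(-1)^{s_2-1}B_{s_1+s_2-j}}{(s_1+s_2-j)!}\binom{s_1+s_2-j-1}{s_1-j}\left[\begin{matrix}j\\ r_1+r_2\end{matrix}\right]\\ &+\binom{r_1+r_2}{r_1}\sum_{j=1}^{s_2}\frac{(-1)^{s_1-1}B_{s_1+s_2-j}}{(s_1+s_2-j)!}\binom{s_1+s_2-j-1}{s_2-j}\left[\begin{matrix}j\\ r_1+r_2\end{matrix}\right]; \end{align*} (ii) \begin{align*} \left[\begin{matrix}s_1\\ r_1\end{matrix}\right]\left[\begin{matrix}s_2\\ r_2\end{matrix}\right] =&\sum_{\substack{1\le j\le s_1\\ 0\le k\le r_2}}\binom{s_1+s_2-j-1}{s_1-j}\binom{r_1+r_2-k}{r_1}(-1)^{r_2-k}\left[\begin{matrix}s_1+s_2-j,\ j\\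 k,\ r_1+r_2-k\end{matrix}\right]\\ &+\sum_{\substack{1\le j\le s_2\\ 0\le k\le r_1}}\binom{s_1+s_2-j-1}{s_1-1}\binom{r_1+r_2-k}{r_1-k}(-1)^{r_1-k}\left[\begin{matrix}s_1+s_2-j,\ j\\ k,\ r_1+r_2-k\end{matrix}\right]\\ &+\binom{s_1+s_2-2}{s_1-1}\left[\begin{matrix}s_1+s_2-1\\ r_1+r_2+1\end{matrix}\right]\\ &+\binom{s_1+s_2-2}{s_1-1}\sum_{j=0}^{r_1}\frac{(-1)^{r_2}B_{r_1+r_2-j+1}}{(r_1+r_2-j+1)!}\binom{r_1+r_2-j}{r_1-j}\left[\begin{matrix}s_1+s_2-1\\ j\end{matrix}\right]\\ &+\binom{s_1+s_2-2}{s_1-1}\sum_{j=0}^{r_2}\frac{(-1)^{r_1}B_{r_1+r_2-j+1}}{(r_1+r_2-j+1)!}\binom{r_1+r_2-j}{r_2-j}\left[\begin{matrix}s_1+s_2-1\\ j\end{matrix}\right]. \end{align*}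
   Context: For integers $s_1,\dots,s_l\ge1$ and $r_1,\dots,r_l\ge0$ the bi-bracket is \[ \left[\begin{matrix}s_1,\dots,s_l\\ r_1,\dots,r_l\end{matrix}\right]:=\sum_{\substack{u_1>\dots>u_l>0\\ v_1,\dots,v_l>0}}\prod_{j=1}^{l}\frac{u_j^{r_j}}{r_j!}\,\frac{v_j^{s_j-1}}{(s_j-1)!}\;q^{u_1v_1+\dots+u_lv_l}\in\mathbb{Q}[[q]]. \] *)

theory Defs
  imports "HOL-Computational_Algebra.Formal_Power_Series"
begin

definition bernoulli :: "nat \<Rightarrow> rat" where
  "bernoulli k = fact k * fps_nth (fps_X / (fps_exp 1 - 1)) k"

text \<open>Bi-bracket with upper row ss = [s_1,...,s_l] and lower row rs = [r_1,...,r_l],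
  as a formal power series in q over the rationals.\<close>
definition bibracket :: "nat list \<Rightarrow> nat list \<Rightarrow> rat fps" where
  "bibracket ss rs = Abs_fps (\<lambda>N.
     \<Sum>(us, vs) \<in> {(us, vs). length us = length ss \<and> length vs = length ss
                    \<and> sorted_wrt (>) us \<and> (\<forall>u\<in>set us. u > 0) \<and> (\<forall>v\<in>set vs. v > 0)
                    \<and> (\<Sum>j<length ss. us ! j * vs ! j) = N}.
       \<Prod>j<length ss. (of_nat (us ! j) ^ (rs ! j) / fact (rs ! j))
                      * (of_nat (vs ! j) ^ (ss ! j - 1) / fact (ss ! j - 1)))"

end

theory Submission
  imports Defs
begin

unbundle fps_syntax


definition Bf :: "rat fps" where "Bf = fps_X / (fps_exp 1 - 1)"
definition Ef :: "rat fps" where "Ef = Abs_fps (\<lambda>k. 1 / fact (Suc k))"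
definition Ef' :: "rat fps" where "Ef' = Abs_fps (\<lambda>k. (-1)^k / fact (Suc k))"
definition beta :: "nat \<Rightarrow> rat" where "beta k = bernoulli k / fact k"

lemma beta_Bf: "beta k = Bf $ k"
  by (simp add: beta_def bernoulli_def Bf_def)

lemma XEf: "fps_X * Ef = fps_exp 1 - 1"
proof (rule fps_ext)
  fix n show "(fps_X * Ef) $ n = (fps_exp 1 - 1) $ n"
    by (cases n) (auto simp: Ef_def fps_X_mult_nth algebra_simps)
qed

lemma XEf': "fps_X * Ef' = 1 - fps_exp (-1)"
proof (rule fps_ext)
  fix n show "(fps_X * Ef') $ n = (1 - fps_exp (-1)) $ n"
    by (cases n) (auto simp: Ef'_def fps_X_mult_nth algebra_simps)
qed

lemma Bf_Ef: "Bf * Ef = 1"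
proof -
  have ne: "fps_exp (1::rat) - 1 \<noteq> 0"
  proof
    assume "fps_exp (1::rat) - 1 = 0"
    hence "(fps_exp (1::rat) - 1) $ 1 = 0" by simp
    thus False by simp
  qed
  have sd: "subdegree (fps_exp (1::rat) - 1) \<le> subdegree (fps_X :: rat fps)"
    by (rule subdegree_leI) auto
  have "Bf * (fps_exp 1 - 1) = fps_X"
    unfolding Bf_def using fps_times_divide_eq[OF ne sd] .
  hence "fps_X * (Bf * Ef) = fps_X * 1" by (simp add: XEf[symmetric] algebra_simps)
  thus ?thesis by (simp add: fps_X_neq_zero)
qed

lemma Ef'_eq: "Ef' = fps_exp (-1) * Ef"
proof -
  have "fps_X * (fps_exp (-1) * Ef) = fps_exp (-1) * (fps_X * Ef)" by (simp add: algebra_simps)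
  also have "\<dots> = fps_exp (-1) * (fps_exp 1 - 1)" by (simp only: XEf)
  also have "\<dots> = fps_exp (-1) * fps_exp 1 - fps_exp (-1)" by (simp add: algebra_simps)
  also have "\<dots> = 1 - fps_exp (-1)" by (simp add: fps_exp_add_mult[symmetric])
  finally have "fps_X * Ef' = fps_X * (fps_exp (-1) * Ef)" by (simp add: XEf')
  thus ?thesis using fps_X_neq_zero mult_left_cancel by blast
qed

lemma beta_rec: "(\<Sum>k=0..d. beta k / fact (Suc d - k)) = (if d = 0 then 1 else 0)"
proof -
  have "(Bf * Ef) $ d = (if d = 0 then 1 else 0)" by (simp add: Bf_Ef)
  moreover have "(Bf * Ef) $ d = (\<Sum>k=0..d. beta k / fact (Suc d - k))"
    by (auto simp: fps_mult_nth Ef_def beta_Bf Suc_diff_le intro!: sum.cong)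
  ultimately show ?thesis by simp
qed

lemma beta_refl: "(-1)^k * beta k = beta k + (if k = 1 then 1 else 0)"
proof -
  define C where "C = Abs_fps (\<lambda>k. (-1)^k * beta k)"
  have "C * Ef' = 1"
  proof (rule fps_ext)
    fix n
    have "(C * Ef') $ n = (\<Sum>i=0..n. (-1)^n * (Bf $ i * Ef $ (n - i)))"
      unfolding fps_mult_nth
    proof (rule sum.cong)
      fix i assume "i \<in> {0..n}"
      hence "(-1::rat)^i * (-1)^(n-i) = (-1)^n" by (simp add: power_add[symmetric])
      thus "C $ i * Ef' $ (n - i) = (-1)^n * (Bf $ i * Ef $ (n - i))"
        by (simp add: C_def Ef'_def Ef_def beta_Bf field_simps)
    qed simp
    also have "\<dots> = (-1)^n * (Bf * Ef) $ n" by (simp add: fps_mult_nth sum_distrib_left)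
    finally show "(C * Ef') $ n = 1 $ n" by (simp add: Bf_Ef)
  qed
  moreover have "(Bf + fps_X) * Ef' = 1"
  proof -
    have "(Bf + fps_X) * Ef' = fps_exp (-1) * (Bf * Ef + fps_X * Ef)"
      by (simp add: Ef'_eq algebra_simps)
    also have "\<dots> = fps_exp (-1) * fps_exp 1" by (simp add: Bf_Ef XEf)
    also have "\<dots> = 1" by (simp add: fps_exp_add_mult[symmetric])
    finally show ?thesis .
  qed
  ultimately have "C * Ef' = (Bf + fps_X) * Ef'" by simp
  moreover have "Ef' \<noteq> 0"
  proof
    assume "Ef' = 0" hence "Ef' $ 0 = 0" by simp
    thus False by (simp add: Ef'_def)
  qed
  ultimately have "C = Bf + fps_X" by simp
  hence "C $ k = (Bf + fps_X) $ k" by simp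
  thus ?thesis by (simp add: C_def beta_Bf fps_X_def)
qed



definition p :: "nat \<Rightarrow> rat \<Rightarrow> rat" where "p m x = x^m / fact m"
definition bp :: "nat \<Rightarrow> rat \<Rightarrow> rat" where "bp m x = (\<Sum>k\<le>m. beta k * p (m-k) x)"

lemma p_add: "p j (x+y) = (\<Sum>i\<le>j. p i x * p (j-i) y)"
proof -
  have "p j (x+y) = (\<Sum>i\<le>j. of_nat (j choose i) * x^i * y^(j-i)) / fact j"
    by (simp add: p_def binomial_ring)
  also have "\<dots> = (\<Sum>i\<le>j. p i x * p (j-i) y)"
    unfolding sum_divide_distrib
    by (rule sum.cong) (auto simp: p_def binomial_fact field_simps)
  finally show ?thesis .
qed

lemma p_mult: "p i x * p j x = of_nat ((i+j) choose i) * p (i+j) x"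
  by (simp add: p_def binomial_fact field_simps power_add)

lemma tri_swap:
  fixes f :: "nat \<Rightarrow> nat \<Rightarrow> rat"
  shows "(\<Sum>k\<le>m. \<Sum>i\<le>m-k. f k i) = (\<Sum>i\<le>m. \<Sum>k\<le>m-i. f k i)"
proof -
  have "(\<Sum>k\<le>m. \<Sum>i\<le>m-k. f k i) = (\<Sum>k\<le>m. \<Sum>i\<le>m. if k + i \<le> m then f k i else 0)"
    by (rule sum.cong[OF refl], rule sum.mono_neutral_cong_left) auto
  also have "\<dots> = (\<Sum>i\<le>m. \<Sum>k\<le>m. if k + i \<le> m then f k i else 0)"
    by (rule sum.swap)
  also have "\<dots> = (\<Sum>i\<le>m. \<Sum>k\<le>m-i. f k i)"
    by (rule sum.cong[OF refl], rule sum.mono_neutral_cong_right) auto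
  finally show ?thesis .
qed

lemma bp_step: "bp (Suc m) (x+1) - bp (Suc m) x = p m x"
proof -
  have p1: "p j 1 = 1 / fact j" for j by (simp add: p_def)
  have "bp (Suc m) (x+1) = (\<Sum>k\<le>Suc m. beta k * (\<Sum>i\<le>Suc m - k. p i x / fact (Suc m - k - i)))"
    unfolding bp_def p_add p1 by simp
  also have "\<dots> = (\<Sum>k\<le>Suc m. beta k * (\<Sum>i<Suc m - k. p i x / fact (Suc m - k - i)))
        + bp (Suc m) x"
    unfolding bp_def sum.distrib[symmetric]
    by (rule sum.cong) (auto simp: lessThan_Suc_atMost[symmetric] algebra_simps)
  finally have "bp (Suc m) (x+1) - bp (Suc m) x =
      (\<Sum>k\<le>Suc m. beta k * (\<Sum>i<Suc m - k. p i x / fact (Suc m - k - i)))" by simp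
  also have "\<dots> = (\<Sum>k\<le>m. \<Sum>i\<le>m - k. beta k * (p i x / fact (Suc m - k - i)))"
    by (simp add: sum_distrib_left Suc_diff_le lessThan_Suc_atMost)
  also have "\<dots> = (\<Sum>i\<le>m. \<Sum>k\<le>m - i. beta k * (p i x / fact (Suc m - k - i)))"
    by (rule tri_swap)
  also have "\<dots> = (\<Sum>i\<le>m. p i x * (\<Sum>k\<le>m - i. beta k / fact (Suc (m - i) - k)))"
    unfolding sum_distrib_left
    by (intro sum.cong refl) (auto simp: Suc_diff_le field_simps)
  also have "\<dots> = (\<Sum>i\<le>m. if i = m then p i x else 0)"
  proof (intro sum.cong refl)
    fix i assume "i \<in> {..m}"
    have "(\<Sum>k\<le>m - i. beta k / fact (Suc (m - i) - k)) = (if m - i = 0 then 1 else 0)"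
      using beta_rec[of "m - i"] by (simp only: atMost_atLeast0)
    thus "p i x * (\<Sum>k\<le>m - i. beta k / fact (Suc (m - i) - k)) = (if i = m then p i x else 0)"
      using \<open>i \<in> {..m}\<close> by auto
  qed
  also have "\<dots> = p m x" by simp
  finally show ?thesis .
qed

lemma bp_zero: "bp (Suc m) 0 = beta (Suc m)"
proof -
  have "bp (Suc m) 0 = (\<Sum>k\<le>Suc m. if k = Suc m then beta k else 0)"
    unfolding bp_def by (intro sum.cong refl) (auto simp: p_def)
  thus ?thesis by simp
qed

lemma faulhaber: "(\<Sum>v<n. p m (of_nat v)) = bp (Suc m) (of_nat n) - beta (Suc m)"
proof (induction n)
  case 0 thus ?case using bp_zero by simp
next
  case (Suc n)
  have "bp (Suc m) (of_nat (Suc n)) = bp (Suc m) (of_nat n) + p m (of_nat n)"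
    using bp_step[of m "of_nat n"] by (simp add: add.commute)
  with Suc show ?case by simp
qed



lemma vander:
  assumes "k \<le> a + b + 1"
  shows "(\<Sum>t\<le>b. (-1)^t * of_nat ((a+t) choose t) * of_nat ((a+b+1-k) choose (b-t)) :: rat)
       = (if k = 0 then 1 else if k \<le> b then 0 else (-1)^b * of_nat ((k-1) choose b))"
proof -
  have g1: "(-(of_nat a + 1) :: rat) gchoose t = (-1)^t * of_nat ((a+t) choose t)" for t
  proof -
    have "(-(of_nat a + 1) :: rat) gchoose t = (-1)^t * ((of_nat t - (-(of_nat a + 1)) - 1) gchoose t)"
      by (rule gbinomial_negated_upper)
    also have "(of_nat t - (-(of_nat a + 1)) - 1 :: rat) = of_nat (a+t)" by simp
    finally show ?thesis unfolding binomial_gbinomial .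
  qed
  have "(\<Sum>t\<le>b. (-1)^t * of_nat ((a+t) choose t) * of_nat ((a+b+1-k) choose (b-t)) :: rat)
      = (\<Sum>t=0..b. ((-(of_nat a + 1) :: rat) gchoose t) * (of_nat (a+b+1-k) gchoose (b-t)))"
    unfolding atMost_atLeast0
    by (intro sum.cong refl) (simp only: g1 binomial_gbinomial)
  also have "\<dots> = (-(of_nat a + 1) + of_nat (a+b+1-k)) gchoose b"
    by (rule gbinomial_Vandermonde)
  also have "(-(of_nat a + 1) + of_nat (a+b+1-k) :: rat) = of_int (int b - int k)"
    using assms by (simp add: of_nat_diff)
  finally have eq: "(\<Sum>t\<le>b. (-1)^t * of_nat ((a+t) choose t) * of_nat ((a+b+1-k) choose (b-t)) :: rat)
      = of_int (int b - int k) gchoose b" .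
  show ?thesis
  proof (cases "k \<le> b")
    case True
    hence "(of_int (int b - int k) :: rat) = of_nat (b - k)" by (simp add: of_nat_diff)
    hence "(of_int (int b - int k) :: rat) gchoose b = of_nat ((b - k) choose b)"
      by (simp only: binomial_gbinomial)
    moreover have "((b - k) choose b) = (if k = 0 then 1 else 0)"
      using True by auto
    ultimately show ?thesis using eq True by simp
  next
    case False
    have "(of_int (int b - int k) :: rat) gchoose b
        = (-1)^b * ((of_nat b - of_int (int b - int k) - 1) gchoose b)"
      by (rule gbinomial_negated_upper)
    also have "(of_nat b - of_int (int b - int k) - 1 :: rat) = of_nat (k - 1)"
      using False by (simp add: of_nat_diff)
    also have "(of_nat (k - 1) :: rat) gchoose b = of_nat ((k - 1) choose b)"
      by (simp only: binomial_gbinomial)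
    finally show ?thesis using eq False by simp
  qed
qed

lemma sum_atMost_rev: "(\<Sum>i\<le>m. g i) = (\<Sum>i\<le>m. g (m - i :: nat))"
  by (rule sum.reindex_bij_witness[where i="\<lambda>i. m - i" and j="\<lambda>i. m - i"]) auto

lemma p_zero: "p i 0 = (if i = 0 then 1 else 0)" by (simp add: p_def)

lemma p_neg: "p t (- y) = (-1)^t * p t y"
  unfolding p_def power_minus[of y] by (rule times_divide_eq_right[symmetric])

lemma beta0: "beta 0 = 1"
  using beta_rec[of 0] by simp

lemma part1:
  fixes a b :: nat and x :: rat
  shows "(\<Sum>t\<le>b. (-1)^t * of_nat ((a+t) choose t) * p (b-t) x * bp (Suc (a+t)) x)
     = p (a+b+1) x + (\<Sum>i\<le>a. (-1)^b * beta (a+b+1-i) * of_nat ((a+b-i) choose (a-i)) * p i x)"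
proof -
  define M where "M = a+b+1"
  define V where "V k = (\<Sum>t\<le>b. (-1)^t * of_nat ((a+t) choose t) * of_nat ((a+b+1-k) choose (b-t)) :: rat)" for k
  have "(\<Sum>t\<le>b. (-1)^t * of_nat ((a+t) choose t) * p (b-t) x * bp (Suc (a+t)) x)
      = (\<Sum>t\<le>b. \<Sum>k\<le>M. (-1)^t * of_nat ((a+t) choose t) * (beta k * (of_nat ((a+b+1-k) choose (b-t)) * p (a+b+1-k) x)))"
  proof (intro sum.cong refl)
    fix t assume t: "t \<in> {..b}"
    have "p (b-t) x * bp (Suc (a+t)) x = (\<Sum>k\<le>Suc (a+t). beta k * (p (b-t) x * p (Suc (a+t) - k) x))"
      unfolding bp_def sum_distrib_left by (simp add: algebra_simps)
    also have "\<dots> = (\<Sum>k\<le>Suc (a+t). beta k * (of_nat ((a+b+1-k) choose (b-t)) * p (a+b+1-k) x))"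
    proof (intro sum.cong refl)
      fix k assume k: "k \<in> {..Suc (a+t)}"
      have e: "b - t + (Suc (a+t) - k) = a+b+1-k" using t k by auto
      show "beta k * (p (b-t) x * p (Suc (a+t) - k) x) = beta k * (of_nat ((a+b+1-k) choose (b-t)) * p (a+b+1-k) x)"
        by (simp only: p_mult e)
    qed
    also have "\<dots> = (\<Sum>k\<le>M. beta k * (of_nat ((a+b+1-k) choose (b-t)) * p (a+b+1-k) x))"
      using t by (intro sum.mono_neutral_left) (auto simp: M_def)
    finally show "(-1)^t * of_nat ((a+t) choose t) * p (b-t) x * bp (Suc (a+t)) x
       = (\<Sum>k\<le>M. (-1)^t * of_nat ((a+t) choose t) * (beta k * (of_nat ((a+b+1-k) choose (b-t)) * p (a+b+1-k) x)))"
      by (simp add: sum_distrib_left mult.assoc)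
  qed
  also have "\<dots> = (\<Sum>k\<le>M. \<Sum>t\<le>b. (-1)^t * of_nat ((a+t) choose t) * (beta k * (of_nat ((a+b+1-k) choose (b-t)) * p (a+b+1-k) x)))"
    by (rule sum.swap)
  also have "\<dots> = (\<Sum>k\<le>M. beta k * p (a+b+1-k) x * V k)"
    unfolding V_def sum_distrib_left by (intro sum.cong refl) (simp add: algebra_simps)
  also have "\<dots> = (\<Sum>k\<le>M. beta k * p (a+b+1-k) x *
       (if k = 0 then 1 else if k \<le> b then 0 else (-1)^b * of_nat ((k-1) choose b)))"
  proof (intro sum.cong refl)
    fix k assume "k \<in> {..M}"
    hence "V k = (if k = 0 then 1 else if k \<le> b then 0 else (-1)^b * of_nat ((k-1) choose b))"
      unfolding V_def by (intro vander) (simp add: M_def)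
    thus "beta k * p (a+b+1-k) x * V k = beta k * p (a+b+1-k) x *
       (if k = 0 then 1 else if k \<le> b then 0 else (-1)^b * of_nat ((k-1) choose b))" by simp
  qed
  also have "\<dots> = (\<Sum>i\<le>M. beta (M-i) * p i x *
       (if M-i = 0 then 1 else if M-i \<le> b then 0 else (-1)^b * of_nat ((M-i-1) choose b)))"
    by (subst sum_atMost_rev) (intro sum.cong refl, simp add: M_def)
  also have "\<dots> = (\<Sum>i\<le>a. beta (M-i) * p i x * ((-1)^b * of_nat ((M-i-1) choose b)))
      + (\<Sum>i\<in>{a<..M}. beta (M-i) * p i x *
       (if M-i = 0 then 1 else if M-i \<le> b then 0 else (-1)^b * of_nat ((M-i-1) choose b)))"
  proof -
    have U: "{..M} = {..a} \<union> {a<..M}" by (auto simp: M_def)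
    have "(\<Sum>i\<le>M. beta (M-i) * p i x *
       (if M-i = 0 then 1 else if M-i \<le> b then 0 else (-1)^b * of_nat ((M-i-1) choose b)))
      = (\<Sum>i\<le>a. beta (M-i) * p i x *
       (if M-i = 0 then 1 else if M-i \<le> b then 0 else (-1)^b * of_nat ((M-i-1) choose b)))
      + (\<Sum>i\<in>{a<..M}. beta (M-i) * p i x *
       (if M-i = 0 then 1 else if M-i \<le> b then 0 else (-1)^b * of_nat ((M-i-1) choose b)))"
      by (subst U, rule sum.union_disjoint) auto
    also have "(\<Sum>i\<le>a. beta (M-i) * p i x *
       (if M-i = 0 then 1 else if M-i \<le> b then 0 else (-1)^b * of_nat ((M-i-1) choose b)))
      = (\<Sum>i\<le>a. beta (M-i) * p i x * ((-1)^b * of_nat ((M-i-1) choose b)))"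
      by (intro sum.cong refl) (auto simp: M_def)
    finally show ?thesis .
  qed
  also have "(\<Sum>i\<in>{a<..M}. beta (M-i) * p i x *
       (if M-i = 0 then 1 else if M-i \<le> b then 0 else (-1)^b * of_nat ((M-i-1) choose b)))
      = (\<Sum>i\<in>{a<..M}. if i = M then p M x else 0)"
    by (intro sum.cong refl) (auto simp: M_def beta0)
  also have "\<dots> = p M x" by (simp add: M_def)
  also have "(\<Sum>i\<le>a. beta (M-i) * p i x * ((-1)^b * of_nat ((M-i-1) choose b)))
      = (\<Sum>i\<le>a. (-1)^b * beta (a+b+1-i) * of_nat ((a+b-i) choose (a-i)) * p i x)"
  proof (intro sum.cong refl)
    fix i assume i: "i \<in> {..a}"
    have "(a+b-i) choose b = (a+b-i) choose (a-i)"
      using i by (subst binomial_symmetric) (auto simp: diff_diff_left)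
    moreover have "M - i - 1 = a+b-i" by (simp add: M_def)
    ultimately show "beta (M-i) * p i x * ((-1)^b * of_nat ((M-i-1) choose b))
       = (-1)^b * beta (a+b+1-i) * of_nat ((a+b-i) choose (a-i)) * p i x"
      by (simp add: M_def)
  qed
  finally show ?thesis by (simp add: M_def add.commute)
qed

lemma part2:
  fixes a b :: nat and x :: rat
  shows "- (\<Sum>t\<le>b. (-1)^t * of_nat ((a+t) choose t) * p (b-t) x * beta (Suc (a+t)))
     = (\<Sum>i\<le>b. (-1)^a * beta (a+b+1-i) * of_nat ((a+b-i) choose (b-i)) * p i x)
       + (if a = 0 then p b x else 0)"
proof -
  have "- (\<Sum>t\<le>b. (-1)^t * of_nat ((a+t) choose t) * p (b-t) x * beta (Suc (a+t)))
      = (\<Sum>i\<le>b. - ((-1)^(b-i) * of_nat ((a+(b-i)) choose (b-i)) * p (b-(b-i)) x * beta (Suc (a+(b-i)))))"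
    by (subst sum_atMost_rev) (simp add: sum_negf)
  also have "\<dots> = (\<Sum>i\<le>b. (-1)^a * beta (a+b+1-i) * of_nat ((a+b-i) choose (b-i)) * p i x
       + (if a = 0 \<and> i = b then p b x else 0))"
  proof (intro sum.cong refl)
    fix i assume i: "i \<in> {..b}"
    define K where "K = a + (b-i) + 1"
    have K': "a+b+1-i = K" "Suc (a+(b-i)) = K" "a+(b-i) = a+b-i" "b-(b-i) = i" using i by (auto simp: K_def)
    have r: "(-1)^K * beta K = beta K + (if K = 1 then 1 else 0)" by (rule beta_refl)
    have s: "(-1::rat)^a * (-1)^K = - ((-1)^(b-i))"
    proof -
      have "(-1::rat)^a * (-1)^K = ((-1)^a * (-1)^a) * (-1)^(b-i) * (-1)"
        by (simp add: K_def power_add)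
      also have "(-1::rat)^a * (-1)^a = 1" by (simp add: power_add[symmetric])
      finally show ?thesis by simp
    qed
    have "- ((-1)^(b-i) * beta K) = (-1)^a * beta K + (if a = 0 \<and> i = b then 1 else 0)"
    proof -
      have "- ((-1)^(b-i) * beta K) = (-1)^a * ((-1)^K * beta K)" using s by (simp add: mult.assoc[symmetric])
      also have "\<dots> = (-1)^a * beta K + (-1)^a * (if K = 1 then 1 else 0)" using r by (simp add: algebra_simps)
      also have "(-1::rat)^a * (if K = 1 then 1 else 0) = (if a = 0 \<and> i = b then 1 else 0)"
        using i by (auto simp: K_def)
      finally show ?thesis .
    qed
    note h = this
    define C where "C = (of_nat ((a+b-i) choose (b-i)) :: rat)"
    have "- ((-1)^(b-i) * of_nat ((a+(b-i)) choose (b-i)) * p (b-(b-i)) x * beta (Suc (a+(b-i))))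
        = (- ((-1)^(b-i) * beta K)) * (C * p i x)"
      unfolding K'(2) K'(4) unfolding K'(3) C_def by (simp add: algebra_simps)
    also have "\<dots> = ((-1)^a * beta K + (if a = 0 \<and> i = b then 1 else 0)) * (C * p i x)"
      by (simp only: h)
    also have "\<dots> = (-1)^a * beta K * C * p i x + (if a = 0 \<and> i = b then 1 else 0) * (C * p i x)"
      by (simp add: algebra_simps)
    also have "(if a = 0 \<and> i = b then 1 else 0) * (C * p i x) = (if a = 0 \<and> i = b then p b x else 0)"
      by (auto simp: C_def)
    finally show "- ((-1)^(b-i) * of_nat ((a+(b-i)) choose (b-i)) * p (b-(b-i)) x * beta (Suc (a+(b-i))))
       = (-1)^a * beta (a+b+1-i) * of_nat ((a+b-i) choose (b-i)) * p i x
       + (if a = 0 \<and> i = b then p b x else 0)"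
      unfolding K'(1) C_def .
  qed
  also have "\<dots> = (\<Sum>i\<le>b. (-1)^a * beta (a+b+1-i) * of_nat ((a+b-i) choose (b-i)) * p i x)
       + (\<Sum>i\<le>b. (if a = 0 \<and> i = b then p b x else 0))"
    by (rule sum.distrib)
  also have "(\<Sum>i\<le>b. (if a = 0 \<and> i = b then p b x else 0)) = (if a = 0 then p b x else 0)"
    by (cases "a = 0") auto
  finally show ?thesis .
qed

lemma Lsum:
  fixes a b n :: nat
  assumes "1 \<le> n"
  shows "(\<Sum>v\<in>{1..<n}. p a (of_nat v) * p b (of_nat n - of_nat v))
     = p (a+b+1) (of_nat n)
       + (\<Sum>i\<le>a. (-1)^b * beta (a+b+1-i) * of_nat ((a+b-i) choose (a-i)) * p i (of_nat n))
       + (\<Sum>i\<le>b. (-1)^a * beta (a+b+1-i) * of_nat ((a+b-i) choose (b-i)) * p i (of_nat n))"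
proof -
  define x :: rat where "x = of_nat n"
  define S where "S = (\<Sum>v<n. p a (of_nat v) * p b (x - of_nat v))"
  have "{..<n} = insert 0 {1..<n}" using assms by auto
  hence S1: "S = (if a = 0 then p b x else 0) + (\<Sum>v\<in>{1..<n}. p a (of_nat v) * p b (x - of_nat v))"
    unfolding S_def by (simp add: p_zero)
  have "S = (\<Sum>v<n. \<Sum>t\<le>b. (-1)^t * of_nat ((a+t) choose t) * p (b-t) x * p (a+t) (of_nat v))"
    unfolding S_def
  proof (intro sum.cong refl)
    fix v
    have "p b (x - of_nat v) = (\<Sum>t\<le>b. p t (- of_nat v) * p (b-t) x)"
      using p_add[of b "- of_nat v" x] by simp
    hence "p a (of_nat v) * p b (x - of_nat v) = (\<Sum>t\<le>b. (-1)^t * p (b-t) x * (p a (of_nat v) * p t (of_nat v)))"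
      by (simp add: sum_distrib_left p_neg algebra_simps)
    also have "\<dots> = (\<Sum>t\<le>b. (-1)^t * of_nat ((a+t) choose t) * p (b-t) x * p (a+t) (of_nat v))"
    proof (intro sum.cong refl)
      fix t
      have "(a+t) choose a = (a+t) choose t" by (subst binomial_symmetric) auto
      thus "(-1)^t * p (b-t) x * (p a (of_nat v) * p t (of_nat v)) = (-1)^t * of_nat ((a+t) choose t) * p (b-t) x * p (a+t) (of_nat v)"
        by (simp add: p_mult)
    qed
    finally show "p a (of_nat v) * p b (x - of_nat v) = (\<Sum>t\<le>b. (-1)^t * of_nat ((a+t) choose t) * p (b-t) x * p (a+t) (of_nat v))" .
  qed
  also have "\<dots> = (\<Sum>t\<le>b. (-1)^t * of_nat ((a+t) choose t) * p (b-t) x * (\<Sum>v<n. p (a+t) (of_nat v)))"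
    by (subst sum.swap) (simp add: sum_distrib_left)
  also have "\<dots> = (\<Sum>t\<le>b. (-1)^t * of_nat ((a+t) choose t) * p (b-t) x * bp (Suc (a+t)) x)
      - (\<Sum>t\<le>b. (-1)^t * of_nat ((a+t) choose t) * p (b-t) x * beta (Suc (a+t)))"
    by (simp add: faulhaber x_def sum_subtractf[symmetric] algebra_simps)
  finally have S2: "S = (\<Sum>t\<le>b. (-1)^t * of_nat ((a+t) choose t) * p (b-t) x * bp (Suc (a+t)) x)
      - (\<Sum>t\<le>b. (-1)^t * of_nat ((a+t) choose t) * p (b-t) x * beta (Suc (a+t)))" .
  have "S = p (a+b+1) x + (\<Sum>i\<le>a. (-1)^b * beta (a+b+1-i) * of_nat ((a+b-i) choose (a-i)) * p i x)
      + ((\<Sum>i\<le>b. (-1)^a * beta (a+b+1-i) * of_nat ((a+b-i) choose (b-i)) * p i x)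
       + (if a = 0 then p b x else 0))"
    unfolding S2 diff_conv_add_uminus part1 part2 by (simp only: add.assoc)
  with S1 show ?thesis by (simp add: x_def)
qed



definition P :: "nat \<Rightarrow> (nat \<times> nat) set" where
  "P n = {(u,v). 0 < u \<and> 0 < v \<and> u * v = n}"
definition T :: "nat \<Rightarrow> ((nat \<times> nat) \<times> (nat \<times> nat)) set" where
  "T n = {((u1,v1),(u2,v2)). 0 < u1 \<and> 0 < v1 \<and> 0 < u2 \<and> 0 < v2 \<and> u1 * v1 + u2 * v2 = n}"
definition T2 :: "nat \<Rightarrow> ((nat \<times> nat) \<times> (nat \<times> nat)) set" where
  "T2 n = {((u1,v1),(u2,v2)). 0 < u2 \<and> u2 < u1 \<and> 0 < v1 \<and> 0 < v2 \<and> u1 * v1 + u2 * v2 = n}"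

definition G :: "nat \<Rightarrow> nat \<Rightarrow> nat \<times> nat \<Rightarrow> rat" where
  "G s r = (\<lambda>(u,v). p r (of_nat u) * p (s-1) (of_nat v))"
definition H :: "nat \<Rightarrow> nat \<Rightarrow> nat \<Rightarrow> nat \<Rightarrow> (nat \<times> nat) \<times> (nat \<times> nat) \<Rightarrow> rat" where
  "H s1 r1 s2 r2 = (\<lambda>((u1,v1),(u2,v2)). p r1 (of_nat u1) * p (s1-1) (of_nat v1) * p r2 (of_nat u2) * p (s2-1) (of_nat v2))"

lemma P_sub: "P n \<subseteq> {..n} \<times> {..n}"
proof
  fix x assume "x \<in> P n"
  then obtain u v where x: "x = (u,v)" "0 < u" "0 < v" "u * v = n" by (auto simp: P_def)
  have "u \<le> u * v" "v \<le> u * v" using x by auto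
  thus "x \<in> {..n} \<times> {..n}" using x by auto
qed

lemma finite_P: "finite (P n)" by (rule finite_subset[OF P_sub]) auto

lemma T_sub: "T n \<subseteq> ({..n} \<times> {..n}) \<times> ({..n} \<times> {..n})"
proof
  fix x assume "x \<in> T n"
  then obtain u1 v1 u2 v2 where x: "x = ((u1,v1),(u2,v2))" "0 < u1" "0 < v1" "0 < u2" "0 < v2"
    "u1 * v1 + u2 * v2 = n" by (auto simp: T_def)
  have a: "u1 \<le> u1 * v1" "v1 \<le> u1 * v1" "u2 \<le> u2 * v2" "v2 \<le> u2 * v2" using x by auto
  have b: "u1 * v1 \<le> n" "u2 * v2 \<le> n" using x(6) by auto
  have "u1 \<le> n" "v1 \<le> n" "u2 \<le> n" "v2 \<le> n" using a b by linarith+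
  thus "x \<in> ({..n} \<times> {..n}) \<times> ({..n} \<times> {..n})" using x by auto
qed

lemma finite_T: "finite (T n)" by (rule finite_subset[OF T_sub]) auto

lemma T2_sub: "T2 n \<subseteq> T n" by (auto simp: T2_def T_def)

lemma finite_T2: "finite (T2 n)" by (rule finite_subset[OF T2_sub finite_T])

lemma bb1: "bibracket [s] [r] $ n = (\<Sum>x\<in>P n. G s r x)"
  unfolding bibracket_def fps_nth_Abs_fps
  apply (rule sum.reindex_bij_witness[where i="\<lambda>(u,v). ([u],[v])" and j="\<lambda>(us,vs). (hd us, hd vs)"])
  apply (auto simp: P_def G_def length_Suc_conv p_def)
  done

lemma bb2: "bibracket [s1,s2] [r1,r2] $ n = (\<Sum>x\<in>T2 n. H s1 r1 s2 r2 x)"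
  unfolding bibracket_def fps_nth_Abs_fps
  apply (rule sum.reindex_bij_witness[where i="\<lambda>((u1,v1),(u2,v2)). ([u1,u2],[v1,v2])"
      and j="\<lambda>(us,vs). ((us!0, vs!0),(us!1, vs!1))"])
  apply (auto simp: T2_def H_def length_Suc_conv numeral_2_eq_2 lessThan_Suc p_def mult_ac)
  done

lemma prod_nth: "(bibracket [s1] [r1] * bibracket [s2] [r2]) $ n = (\<Sum>x\<in>T n. H s1 r1 s2 r2 x)"
proof -
  have "(bibracket [s1] [r1] * bibracket [s2] [r2]) $ n
      = (\<Sum>i=0..n. (\<Sum>a\<in>P i. G s1 r1 a) * (\<Sum>b\<in>P (n-i). G s2 r2 b))"
    by (simp add: fps_mult_nth bb1)
  also have "\<dots> = (\<Sum>i=0..n. \<Sum>z\<in>P i \<times> P (n-i). G s1 r1 (fst z) * G s2 r2 (snd z))"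
    by (simp add: sum_product sum.cartesian_product case_prod_beta)
  also have "\<dots> = (\<Sum>(i,z)\<in>Sigma {0..n} (\<lambda>i. P i \<times> P (n-i)). G s1 r1 (fst z) * G s2 r2 (snd z))"
    by (rule sum.Sigma) (auto simp: finite_P)
  also have "\<dots> = (\<Sum>x\<in>T n. H s1 r1 s2 r2 x)"
    apply (rule sum.reindex_bij_witness[where i="\<lambda>z. (fst (fst z) * snd (fst z), z)" and j="\<lambda>(i,z). z"])
    apply (auto simp: T_def P_def G_def H_def)
    done
  finally show ?thesis .
qed

lemma sum_split3:
  assumes "finite A"
    and "\<And>x. x \<in> A \<Longrightarrow> (P1 x \<and> \<not> P2 x \<and> \<not> P3 x) \<or> (\<not> P1 x \<and> P2 x \<and> \<not> P3 x) \<or> (\<not> P1 x \<and> \<not> P2 x \<and> P3 x)"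
  shows "sum f A = sum f {x\<in>A. P1 x} + sum f {x\<in>A. P2 x} + sum f {x\<in>A. P3 x}"
proof -
  have "sum f A = (\<Sum>x\<in>A. (if P1 x then f x else 0) + (if P2 x then f x else 0) + (if P3 x then f x else 0))"
    by (rule sum.cong) (use assms(2) in auto)
  also have "\<dots> = sum f {x\<in>A. P1 x} + sum f {x\<in>A. P2 x} + sum f {x\<in>A. P3 x}"
    by (simp add: sum.distrib sum.inter_filter[OF assms(1)])
  finally show ?thesis .
qed

lemma split_u:
  "(\<Sum>x\<in>T n. H s1 r1 s2 r2 x) = (\<Sum>x\<in>T2 n. H s1 r1 s2 r2 x) + (\<Sum>x\<in>T2 n. H s2 r2 s1 r1 x)
     + (\<Sum>x\<in>{x\<in>T n. fst (fst x) = fst (snd x)}. H s1 r1 s2 r2 x)"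
proof -
  have "(\<Sum>x\<in>T n. H s1 r1 s2 r2 x) = (\<Sum>x\<in>{x\<in>T n. fst (fst x) > fst (snd x)}. H s1 r1 s2 r2 x)
     + (\<Sum>x\<in>{x\<in>T n. fst (fst x) < fst (snd x)}. H s1 r1 s2 r2 x)
     + (\<Sum>x\<in>{x\<in>T n. fst (fst x) = fst (snd x)}. H s1 r1 s2 r2 x)"
    by (rule sum_split3[OF finite_T]) auto
  moreover have "{x\<in>T n. fst (fst x) > fst (snd x)} = T2 n" by (auto simp: T_def T2_def)
  moreover have "(\<Sum>x\<in>{x\<in>T n. fst (fst x) < fst (snd x)}. H s1 r1 s2 r2 x) = (\<Sum>x\<in>T2 n. H s2 r2 s1 r1 x)"
    apply (rule sum.reindex_bij_witness[where i="\<lambda>(a,b). (b,a)" and j="\<lambda>(a,b). (b,a)"])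
    apply (auto simp: T_def T2_def H_def)
    done
  ultimately show ?thesis by simp
qed

lemma diag_u:
  "(\<Sum>x\<in>{x\<in>T n. fst (fst x) = fst (snd x)}. H s1 r1 s2 r2 x)
   = (\<Sum>(u,m)\<in>P n. p r1 (of_nat u) * p r2 (of_nat u) *
        (\<Sum>v\<in>{1..<m}. p (s1-1) (of_nat v) * p (s2-1) (of_nat m - of_nat v)))"
proof -
  have "(\<Sum>(u,m)\<in>P n. p r1 (of_nat u) * p r2 (of_nat u) *
        (\<Sum>v\<in>{1..<m}. p (s1-1) (of_nat v) * p (s2-1) (of_nat m - of_nat v)))
      = (\<Sum>(u,m)\<in>P n. \<Sum>v\<in>{1..<m}. p r1 (of_nat u) * p r2 (of_nat u) * (p (s1-1) (of_nat v) * p (s2-1) (of_nat m - of_nat v)))"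
    by (simp add: sum_distrib_left case_prod_beta)
  also have "\<dots> = (\<Sum>(um,v)\<in>Sigma (P n) (\<lambda>(u,m). {1..<m}).
       p r1 (of_nat (fst um)) * p r2 (of_nat (fst um)) * (p (s1-1) (of_nat v) * p (s2-1) (of_nat (snd um) - of_nat v)))"
    by (subst sum.Sigma[symmetric]) (auto simp: finite_P case_prod_beta)
  also have "\<dots> = (\<Sum>x\<in>{x\<in>T n. fst (fst x) = fst (snd x)}. H s1 r1 s2 r2 x)"
    apply (rule sum.reindex_bij_witness[where i="\<lambda>((u1,v1),(u2,v2)). ((u1, v1+v2), v1)"
        and j="\<lambda>((u,m),v). ((u,v),(u,m-v))"])
    apply (auto simp: T_def P_def H_def of_nat_diff algebra_simps)
    done
  finally show ?thesis by simp
qed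

lemma part_i_coeff:
  fixes a b r1 r2 n :: nat
  shows "(\<Sum>x\<in>T n. H (Suc a) r1 (Suc b) r2 x) =
     (\<Sum>x\<in>T2 n. H (Suc a) r1 (Suc b) r2 x) + (\<Sum>x\<in>T2 n. H (Suc b) r2 (Suc a) r1 x)
     + of_nat ((r1+r2) choose r1) * (\<Sum>x\<in>P n. G (Suc a + Suc b) (r1+r2) x)
     + of_nat ((r1+r2) choose r1) * (\<Sum>i\<le>a. (-1)^b * beta (a+b+1-i) * of_nat ((a+b-i) choose (a-i)) * (\<Sum>x\<in>P n. G (Suc i) (r1+r2) x))
     + of_nat ((r1+r2) choose r1) * (\<Sum>i\<le>b. (-1)^a * beta (a+b+1-i) * of_nat ((a+b-i) choose (b-i)) * (\<Sum>x\<in>P n. G (Suc i) (r1+r2) x))"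
proof -
  define C :: rat where "C = of_nat ((r1+r2) choose r1)"
  define cA where "cA i = (-1)^b * beta (a+b+1-i) * of_nat ((a+b-i) choose (a-i))" for i
  define cB where "cB i = (-1)^a * beta (a+b+1-i) * of_nat ((a+b-i) choose (b-i))" for i
  have diag: "(\<Sum>x\<in>{x\<in>T n. fst (fst x) = fst (snd x)}. H (Suc a) r1 (Suc b) r2 x)
     = (\<Sum>x\<in>P n. C * G (Suc a + Suc b) (r1+r2) x + (\<Sum>i\<le>a. C * (cA i * G (Suc i) (r1+r2) x))
          + (\<Sum>i\<le>b. C * (cB i * G (Suc i) (r1+r2) x)))"
    unfolding diag_u
  proof (intro sum.cong refl)
    fix x assume x: "x \<in> P n"
    then obtain u m where um: "x = (u,m)" "1 \<le> m" by (cases x) (auto simp: P_def)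
    have pm: "p r1 (of_nat u) * p r2 (of_nat u) = C * p (r1+r2) (of_nat u)"
      by (simp add: p_mult C_def)
    show "(case x of (u, m) \<Rightarrow> p r1 (of_nat u) * p r2 (of_nat u) *
          (\<Sum>v = 1..<m. p (Suc a - 1) (of_nat v) * p (Suc b - 1) (of_nat m - of_nat v))) =
         C * G (Suc a + Suc b) (r1 + r2) x + (\<Sum>i\<le>a. C * (cA i * G (Suc i) (r1 + r2) x))
          + (\<Sum>i\<le>b. C * (cB i * G (Suc i) (r1 + r2) x))"
    proof -
      have "(case x of (u, m) \<Rightarrow> p r1 (of_nat u) * p r2 (of_nat u) *
          (\<Sum>v = 1..<m. p (Suc a - 1) (of_nat v) * p (Suc b - 1) (of_nat m - of_nat v)))
          = C * p (r1+r2) (of_nat u) * (\<Sum>v = 1..<m. p a (of_nat v) * p b (of_nat m - of_nat v))"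
        unfolding um(1) by (simp add: pm)
      also have "\<dots> = C * p (r1+r2) (of_nat u) * (p (a+b+1) (of_nat m) + (\<Sum>i\<le>a. cA i * p i (of_nat m))
          + (\<Sum>i\<le>b. cB i * p i (of_nat m)))"
        unfolding Lsum[OF um(2)] cA_def cB_def by simp
      also have "\<dots> = C * G (Suc a + Suc b) (r1 + r2) x + (\<Sum>i\<le>a. C * (cA i * G (Suc i) (r1 + r2) x))
          + (\<Sum>i\<le>b. C * (cB i * G (Suc i) (r1 + r2) x))"
        unfolding um(1) by (simp add: G_def sum_distrib_left algebra_simps)
      finally show ?thesis .
    qed
  qed
  show ?thesis
    unfolding prod_nth split_u diag sum.distrib C_def[symmetric]
    by (simp add: sum.swap[of _ "P n"] sum_distrib_left cA_def cB_def mult.assoc)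
qed

lemma ar1: "(v2::nat) < v1 \<Longrightarrow> (u1+u2)*v2 + u1*(v1-v2) = u1*v1 + u2*v2"
proof -
  assume "v2 < v1"
  hence le: "u1 * v2 \<le> u1 * v1" by simp
  show ?thesis unfolding distrib_right diff_mult_distrib2 using le by linarith
qed

lemma ar2: "(U2::nat) < U1 \<Longrightarrow> U2*(V1+V2) + (U1-U2)*V1 = U1*V1 + U2*V2"
proof -
  assume "U2 < U1"
  hence le: "U2 * V1 \<le> U1 * V1" by simp
  show ?thesis unfolding distrib_left diff_mult_distrib using le by linarith
qed

lemma ar3: "(v1::nat) < v2 \<Longrightarrow> (u1+u2)*v1 + u2*(v2-v1) = u1*v1 + u2*v2"
proof -
  assume "v1 < v2"
  hence le: "u2 * v1 \<le> u2 * v2" by simp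
  show ?thesis unfolding distrib_right diff_mult_distrib2 using le by linarith
qed

lemma ar4: "(U2::nat) < U1 \<Longrightarrow> (U1-U2)*V1 + U2*(V1+V2) = U1*V1 + U2*V2"
  using ar2[of U2 U1 V1 V2] by (simp add: add.commute)

lemma vgt_reindex:
  "(\<Sum>x\<in>{x\<in>T n. snd (fst x) > snd (snd x)}. H s1 r1 s2 r2 x)
   = (\<Sum>y\<in>T2 n. H s1 r1 s2 r2 ((\<lambda>((U1,V1),(U2,V2)). ((U2, V1+V2),(U1-U2, V1))) y))"
  by (rule sum.reindex_bij_witness[where i="\<lambda>((U1,V1),(U2,V2)). ((U2, V1+V2),(U1-U2, V1))"
        and j="\<lambda>((u1,v1),(u2,v2)). ((u1+u2, v2),(u1, v1-v2))"]) (auto simp: T_def T2_def ar1 ar2)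

lemma vlt_reindex:
  "(\<Sum>x\<in>{x\<in>T n. snd (fst x) < snd (snd x)}. H s1 r1 s2 r2 x)
   = (\<Sum>y\<in>T2 n. H s1 r1 s2 r2 ((\<lambda>((U1,V1),(U2,V2)). ((U1-U2, V1),(U2, V1+V2))) y))"
  by (rule sum.reindex_bij_witness[where i="\<lambda>((U1,V1),(U2,V2)). ((U1-U2, V1),(U2, V1+V2))"
        and j="\<lambda>((u1,v1),(u2,v2)). ((u1+u2, v1),(u2, v2-v1))"]) (auto simp: T_def T2_def ar3 ar4)

lemma p_diff: "p r (x - y) = (\<Sum>k\<le>r. (-1)^(r-k) * p k x * p (r-k) y)"
proof -
  have "p r (x - y) = (\<Sum>k\<le>r. p k x * p (r-k) (-y))"
    using p_add[of r x "-y"] by simp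
  also have "\<dots> = (\<Sum>k\<le>r. (-1)^(r-k) * p k x * p (r-k) y)"
    by (intro sum.cong refl) (simp add: p_neg)
  finally show ?thesis .
qed

lemma vgt_expand:
  assumes "U2 < U1"
  shows "H (Suc a) r1 (Suc b) r2 ((U2, V1+V2),(U1-U2, V1)) =
    (\<Sum>i\<le>a. \<Sum>k\<le>r2. of_nat ((a+b-i) choose (a-i)) * of_nat ((r1+r2-k) choose r1) * (-1)^(r2-k)
       * H (Suc a + Suc b - Suc i) k (Suc i) (r1+r2-k) ((U1,V1),(U2,V2)))"
proof -
  define X1 :: rat where "X1 = of_nat U1"
  define X2 :: rat where "X2 = of_nat U2"
  define Y1 :: rat where "Y1 = of_nat V1"
  define Y2 :: rat where "Y2 = of_nat V2"
  have e1: "p r2 (of_nat (U1-U2)) = (\<Sum>k\<le>r2. (-1)^(r2-k) * p k X1 * p (r2-k) X2)"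
    using assms by (simp add: of_nat_diff X1_def X2_def p_diff)
  have e2: "p a (of_nat (V1+V2)) = (\<Sum>i\<le>a. p i Y2 * p (a-i) Y1)"
    using p_add[of a Y2 Y1] by (simp add: Y1_def Y2_def add.commute)
  have "H (Suc a) r1 (Suc b) r2 ((U2, V1+V2),(U1-U2, V1)) =
      p r1 X2 * p a (of_nat (V1+V2)) * p r2 (of_nat (U1-U2)) * p b Y1"
    by (simp add: H_def X2_def Y1_def)
  also have "\<dots> = ((\<Sum>i\<le>a. p i Y2 * p (a-i) Y1) * (\<Sum>k\<le>r2. (-1)^(r2-k) * p k X1 * p (r2-k) X2)) * (p r1 X2 * p b Y1)"
    unfolding e1 e2 by (simp only: mult_ac)
  also have "\<dots> = (\<Sum>i\<le>a. \<Sum>k\<le>r2. (p i Y2 * p (a-i) Y1) * ((-1)^(r2-k) * p k X1 * p (r2-k) X2) * (p r1 X2 * p b Y1))"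
    by (simp add: sum_distrib_left sum_distrib_right) (rule sum.swap)
  also have "\<dots> = (\<Sum>i\<le>a. \<Sum>k\<le>r2. ((-1)^(r2-k) * p k X1 * p i Y2) * (p r1 X2 * p (r2-k) X2) * (p (a-i) Y1 * p b Y1))"
    by (intro sum.cong refl) (simp only: mult_ac)
  also have "\<dots> = (\<Sum>i\<le>a. \<Sum>k\<le>r2. of_nat ((a+b-i) choose (a-i)) * of_nat ((r1+r2-k) choose r1) * (-1)^(r2-k)
       * H (Suc a + Suc b - Suc i) k (Suc i) (r1+r2-k) ((U1,V1),(U2,V2)))"
  proof (intro sum.cong refl)
    fix i k assume i: "i \<in> {..a}" and k: "k \<in> {..r2}"
    have c1: "r1 + (r2 - k) = r1+r2-k" "a - i + b = a+b-i" "Suc a + Suc b - Suc i - 1 = a+b-i" "Suc i - 1 = i"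
      using i k by auto
    show "((-1)^(r2-k) * p k X1 * p i Y2) * (p r1 X2 * p (r2-k) X2) * (p (a-i) Y1 * p b Y1)
       = of_nat ((a+b-i) choose (a-i)) * of_nat ((r1+r2-k) choose r1) * (-1)^(r2-k)
       * H (Suc a + Suc b - Suc i) k (Suc i) (r1+r2-k) ((U1,V1),(U2,V2))"
      unfolding p_mult c1 H_def by (simp add: X1_def X2_def Y1_def Y2_def c1 algebra_simps)
  qed
  finally show ?thesis .
qed

lemma vlt_expand:
  assumes "U2 < U1"
  shows "H (Suc a) r1 (Suc b) r2 ((U1-U2, V1),(U2, V1+V2)) =
    (\<Sum>i\<le>b. \<Sum>k\<le>r1. of_nat ((a+b-i) choose a) * of_nat ((r1+r2-k) choose (r1-k)) * (-1)^(r1-k)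
       * H (Suc a + Suc b - Suc i) k (Suc i) (r1+r2-k) ((U1,V1),(U2,V2)))"
proof -
  define X1 :: rat where "X1 = of_nat U1"
  define X2 :: rat where "X2 = of_nat U2"
  define Y1 :: rat where "Y1 = of_nat V1"
  define Y2 :: rat where "Y2 = of_nat V2"
  have e1: "p r1 (of_nat (U1-U2)) = (\<Sum>k\<le>r1. (-1)^(r1-k) * p k X1 * p (r1-k) X2)"
    using assms by (simp add: of_nat_diff X1_def X2_def p_diff)
  have e2: "p b (of_nat (V1+V2)) = (\<Sum>i\<le>b. p i Y2 * p (b-i) Y1)"
    using p_add[of b Y2 Y1] by (simp add: Y1_def Y2_def add.commute)
  have "H (Suc a) r1 (Suc b) r2 ((U1-U2, V1),(U2, V1+V2)) =
      p r1 (of_nat (U1-U2)) * p a Y1 * p r2 X2 * p b (of_nat (V1+V2))"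
    by (simp add: H_def X2_def Y1_def)
  also have "\<dots> = ((\<Sum>i\<le>b. p i Y2 * p (b-i) Y1) * (\<Sum>k\<le>r1. (-1)^(r1-k) * p k X1 * p (r1-k) X2)) * (p a Y1 * p r2 X2)"
    unfolding e1 e2 by (simp only: mult_ac)
  also have "\<dots> = (\<Sum>i\<le>b. \<Sum>k\<le>r1. (p i Y2 * p (b-i) Y1) * ((-1)^(r1-k) * p k X1 * p (r1-k) X2) * (p a Y1 * p r2 X2))"
    by (simp add: sum_distrib_left sum_distrib_right) (rule sum.swap)
  also have "\<dots> = (\<Sum>i\<le>b. \<Sum>k\<le>r1. ((-1)^(r1-k) * p k X1 * p i Y2) * (p (r1-k) X2 * p r2 X2) * (p a Y1 * p (b-i) Y1))"
    by (intro sum.cong refl) (simp only: mult_ac)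
  also have "\<dots> = (\<Sum>i\<le>b. \<Sum>k\<le>r1. of_nat ((a+b-i) choose a) * of_nat ((r1+r2-k) choose (r1-k)) * (-1)^(r1-k)
       * H (Suc a + Suc b - Suc i) k (Suc i) (r1+r2-k) ((U1,V1),(U2,V2)))"
  proof (intro sum.cong refl)
    fix i k assume i: "i \<in> {..b}" and k: "k \<in> {..r1}"
    have c1: "r1 - k + r2 = r1+r2-k" "a + (b - i) = a+b-i" "Suc a + Suc b - Suc i - 1 = a+b-i" "Suc i - 1 = i"
      using i k by auto
    show "((-1)^(r1-k) * p k X1 * p i Y2) * (p (r1-k) X2 * p r2 X2) * (p a Y1 * p (b-i) Y1)
       = of_nat ((a+b-i) choose a) * of_nat ((r1+r2-k) choose (r1-k)) * (-1)^(r1-k)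
       * H (Suc a + Suc b - Suc i) k (Suc i) (r1+r2-k) ((U1,V1),(U2,V2))"
      unfolding p_mult c1 H_def by (simp add: X1_def X2_def Y1_def Y2_def c1 algebra_simps)
  qed
  finally show ?thesis .
qed

lemma diag_v:
  "(\<Sum>x\<in>{x\<in>T n. snd (fst x) = snd (snd x)}. H s1 r1 s2 r2 x)
   = (\<Sum>(m,v)\<in>P n. p (s1-1) (of_nat v) * p (s2-1) (of_nat v) *
        (\<Sum>u\<in>{1..<m}. p r1 (of_nat u) * p r2 (of_nat m - of_nat u)))"
proof -
  have "(\<Sum>(m,v)\<in>P n. p (s1-1) (of_nat v) * p (s2-1) (of_nat v) *
        (\<Sum>u\<in>{1..<m}. p r1 (of_nat u) * p r2 (of_nat m - of_nat u)))
      = (\<Sum>(m,v)\<in>P n. \<Sum>u\<in>{1..<m}. p (s1-1) (of_nat v) * p (s2-1) (of_nat v) * (p r1 (of_nat u) * p r2 (of_nat m - of_nat u)))"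
    by (simp add: sum_distrib_left case_prod_beta)
  also have "\<dots> = (\<Sum>(mv,u)\<in>Sigma (P n) (\<lambda>(m,v). {1..<m}).
       p (s1-1) (of_nat (snd mv)) * p (s2-1) (of_nat (snd mv)) * (p r1 (of_nat u) * p r2 (of_nat (fst mv) - of_nat u)))"
    by (subst sum.Sigma[symmetric]) (auto simp: finite_P case_prod_beta)
  also have "\<dots> = (\<Sum>x\<in>{x\<in>T n. snd (fst x) = snd (snd x)}. H s1 r1 s2 r2 x)"
    apply (rule sum.reindex_bij_witness[where i="\<lambda>((u1,v1),(u2,v2)). ((u1+u2, v1), u1)"
        and j="\<lambda>((m,v),u). ((u,v),(m-u,v))"])
    apply (auto simp: T_def P_def H_def of_nat_diff algebra_simps)
    done
  finally show ?thesis by simp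
qed

lemma part_ii_coeff:
  fixes a b r1 r2 n :: nat
  shows "(\<Sum>x\<in>T n. H (Suc a) r1 (Suc b) r2 x) =
     (\<Sum>i\<le>a. \<Sum>k\<le>r2. of_nat ((a+b-i) choose (a-i)) * of_nat ((r1+r2-k) choose r1) * (-1)^(r2-k)
       * (\<Sum>y\<in>T2 n. H (Suc a + Suc b - Suc i) k (Suc i) (r1+r2-k) y))
   + (\<Sum>i\<le>b. \<Sum>k\<le>r1. of_nat ((a+b-i) choose a) * of_nat ((r1+r2-k) choose (r1-k)) * (-1)^(r1-k)
       * (\<Sum>y\<in>T2 n. H (Suc a + Suc b - Suc i) k (Suc i) (r1+r2-k) y))
   + of_nat ((a+b) choose a) * (\<Sum>x\<in>P n. G (Suc (a+b)) (r1+r2+1) x)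
   + of_nat ((a+b) choose a) * (\<Sum>j\<le>r1. (-1)^r2 * beta (r1+r2+1-j) * of_nat ((r1+r2-j) choose (r1-j)) * (\<Sum>x\<in>P n. G (Suc (a+b)) j x))
   + of_nat ((a+b) choose a) * (\<Sum>j\<le>r2. (-1)^r1 * beta (r1+r2+1-j) * of_nat ((r1+r2-j) choose (r2-j)) * (\<Sum>x\<in>P n. G (Suc (a+b)) j x))"
proof -
  define D :: rat where "D = of_nat ((a+b) choose a)"
  define cA where "cA j = (-1)^r2 * beta (r1+r2+1-j) * of_nat ((r1+r2-j) choose (r1-j))" for j
  define cB where "cB j = (-1)^r1 * beta (r1+r2+1-j) * of_nat ((r1+r2-j) choose (r2-j))" for j
  have split: "(\<Sum>x\<in>T n. H (Suc a) r1 (Suc b) r2 x) =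
      (\<Sum>x\<in>{x\<in>T n. snd (fst x) > snd (snd x)}. H (Suc a) r1 (Suc b) r2 x)
    + (\<Sum>x\<in>{x\<in>T n. snd (fst x) < snd (snd x)}. H (Suc a) r1 (Suc b) r2 x)
    + (\<Sum>x\<in>{x\<in>T n. snd (fst x) = snd (snd x)}. H (Suc a) r1 (Suc b) r2 x)"
    by (rule sum_split3[OF finite_T]) auto
  have gt: "(\<Sum>x\<in>{x\<in>T n. snd (fst x) > snd (snd x)}. H (Suc a) r1 (Suc b) r2 x) =
     (\<Sum>i\<le>a. \<Sum>k\<le>r2. of_nat ((a+b-i) choose (a-i)) * of_nat ((r1+r2-k) choose r1) * (-1)^(r2-k)
       * (\<Sum>y\<in>T2 n. H (Suc a + Suc b - Suc i) k (Suc i) (r1+r2-k) y))"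
  proof -
    have "(\<Sum>x\<in>{x\<in>T n. snd (fst x) > snd (snd x)}. H (Suc a) r1 (Suc b) r2 x)
      = (\<Sum>y\<in>T2 n. \<Sum>i\<le>a. \<Sum>k\<le>r2. of_nat ((a+b-i) choose (a-i)) * of_nat ((r1+r2-k) choose r1) * (-1)^(r2-k)
       * H (Suc a + Suc b - Suc i) k (Suc i) (r1+r2-k) y)"
      unfolding vgt_reindex
    proof (intro sum.cong refl)
      fix y assume "y \<in> T2 n"
      then obtain U1 V1 U2 V2 where y: "y = ((U1,V1),(U2,V2))" "U2 < U1" by (auto simp: T2_def)
      show "H (Suc a) r1 (Suc b) r2 ((\<lambda>((U1,V1),(U2,V2)). ((U2, V1+V2),(U1-U2, V1))) y) =
         (\<Sum>i\<le>a. \<Sum>k\<le>r2. of_nat ((a+b-i) choose (a-i)) * of_nat ((r1+r2-k) choose r1) * (-1)^(r2-k)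
         * H (Suc a + Suc b - Suc i) k (Suc i) (r1+r2-k) y)"
        unfolding y(1) using vgt_expand[OF y(2)] by simp
    qed
    also have "\<dots> = (\<Sum>i\<le>a. \<Sum>y\<in>T2 n. \<Sum>k\<le>r2. of_nat ((a+b-i) choose (a-i)) * of_nat ((r1+r2-k) choose r1) * (-1)^(r2-k)
       * H (Suc a + Suc b - Suc i) k (Suc i) (r1+r2-k) y)"
      by (rule sum.swap)
    also have "\<dots> = (\<Sum>i\<le>a. \<Sum>k\<le>r2. \<Sum>y\<in>T2 n. of_nat ((a+b-i) choose (a-i)) * of_nat ((r1+r2-k) choose r1) * (-1)^(r2-k)
       * H (Suc a + Suc b - Suc i) k (Suc i) (r1+r2-k) y)"
      by (intro sum.cong refl sum.swap)
    finally show ?thesis by (simp add: sum_distrib_left)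
  qed
  have lt: "(\<Sum>x\<in>{x\<in>T n. snd (fst x) < snd (snd x)}. H (Suc a) r1 (Suc b) r2 x) =
     (\<Sum>i\<le>b. \<Sum>k\<le>r1. of_nat ((a+b-i) choose a) * of_nat ((r1+r2-k) choose (r1-k)) * (-1)^(r1-k)
       * (\<Sum>y\<in>T2 n. H (Suc a + Suc b - Suc i) k (Suc i) (r1+r2-k) y))"
  proof -
    have "(\<Sum>x\<in>{x\<in>T n. snd (fst x) < snd (snd x)}. H (Suc a) r1 (Suc b) r2 x)
      = (\<Sum>y\<in>T2 n. \<Sum>i\<le>b. \<Sum>k\<le>r1. of_nat ((a+b-i) choose a) * of_nat ((r1+r2-k) choose (r1-k)) * (-1)^(r1-k)
       * H (Suc a + Suc b - Suc i) k (Suc i) (r1+r2-k) y)"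
      unfolding vlt_reindex
    proof (intro sum.cong refl)
      fix y assume "y \<in> T2 n"
      then obtain U1 V1 U2 V2 where y: "y = ((U1,V1),(U2,V2))" "U2 < U1" by (auto simp: T2_def)
      show "H (Suc a) r1 (Suc b) r2 ((\<lambda>((U1,V1),(U2,V2)). ((U1-U2, V1),(U2, V1+V2))) y) =
         (\<Sum>i\<le>b. \<Sum>k\<le>r1. of_nat ((a+b-i) choose a) * of_nat ((r1+r2-k) choose (r1-k)) * (-1)^(r1-k)
         * H (Suc a + Suc b - Suc i) k (Suc i) (r1+r2-k) y)"
        unfolding y(1) using vlt_expand[OF y(2)] by simp
    qed
    also have "\<dots> = (\<Sum>i\<le>b. \<Sum>y\<in>T2 n. \<Sum>k\<le>r1. of_nat ((a+b-i) choose a) * of_nat ((r1+r2-k) choose (r1-k)) * (-1)^(r1-k)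
       * H (Suc a + Suc b - Suc i) k (Suc i) (r1+r2-k) y)"
      by (rule sum.swap)
    also have "\<dots> = (\<Sum>i\<le>b. \<Sum>k\<le>r1. \<Sum>y\<in>T2 n. of_nat ((a+b-i) choose a) * of_nat ((r1+r2-k) choose (r1-k)) * (-1)^(r1-k)
       * H (Suc a + Suc b - Suc i) k (Suc i) (r1+r2-k) y)"
      by (intro sum.cong refl sum.swap)
    finally show ?thesis by (simp add: sum_distrib_left)
  qed
  have diag: "(\<Sum>x\<in>{x\<in>T n. snd (fst x) = snd (snd x)}. H (Suc a) r1 (Suc b) r2 x)
     = (\<Sum>x\<in>P n. D * G (Suc (a+b)) (r1+r2+1) x + (\<Sum>j\<le>r1. D * (cA j * G (Suc (a+b)) j x))
          + (\<Sum>j\<le>r2. D * (cB j * G (Suc (a+b)) j x)))"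
    unfolding diag_v
  proof (intro sum.cong refl)
    fix x assume x: "x \<in> P n"
    then obtain m v where mv: "x = (m,v)" "1 \<le> m" by (cases x) (auto simp: P_def)
    have pm: "p a (of_nat v) * p b (of_nat v) = D * p (a+b) (of_nat v)"
      by (simp add: p_mult D_def)
    show "(case x of (m, v) \<Rightarrow> p (Suc a - 1) (of_nat v) * p (Suc b - 1) (of_nat v) *
          (\<Sum>u = 1..<m. p r1 (of_nat u) * p r2 (of_nat m - of_nat u))) =
         D * G (Suc (a+b)) (r1+r2+1) x + (\<Sum>j\<le>r1. D * (cA j * G (Suc (a+b)) j x))
          + (\<Sum>j\<le>r2. D * (cB j * G (Suc (a+b)) j x))"
    proof -
      have "(case x of (m, v) \<Rightarrow> p (Suc a - 1) (of_nat v) * p (Suc b - 1) (of_nat v) *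
          (\<Sum>u = 1..<m. p r1 (of_nat u) * p r2 (of_nat m - of_nat u)))
          = D * p (a+b) (of_nat v) * (\<Sum>u = 1..<m. p r1 (of_nat u) * p r2 (of_nat m - of_nat u))"
        unfolding mv(1) by (simp add: pm)
      also have "\<dots> = D * p (a+b) (of_nat v) * (p (r1+r2+1) (of_nat m) + (\<Sum>j\<le>r1. cA j * p j (of_nat m))
          + (\<Sum>j\<le>r2. cB j * p j (of_nat m)))"
        unfolding Lsum[OF mv(2)] cA_def cB_def by (simp add: algebra_simps)
      also have "\<dots> = D * G (Suc (a+b)) (r1+r2+1) x + (\<Sum>j\<le>r1. D * (cA j * G (Suc (a+b)) j x))
          + (\<Sum>j\<le>r2. D * (cB j * G (Suc (a+b)) j x))"
        unfolding mv(1) by (simp add: G_def sum_distrib_left algebra_simps)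
      finally show ?thesis .
    qed
  qed
  show ?thesis
    unfolding split gt lt diag sum.distrib D_def[symmetric]
    by (simp add: sum.swap[of _ "P n"] sum_distrib_left cA_def cB_def mult.assoc)
qed

lemma shift1: "(\<Sum>j=1..Suc a. f j) = (\<Sum>i\<le>a. f (Suc i))"
  by (induct a) (auto simp: atMost_Suc add.commute)

theorem proposition3p3:
  fixes s1 s2 r1 r2 :: nat
  assumes "s1 \<ge> 1" and "s2 \<ge> 1"
  shows
   "bibracket [s1] [r1] * bibracket [s2] [r2] =
      bibracket [s1, s2] [r1, r2] + bibracket [s2, s1] [r2, r1]
      + fps_const (of_nat ((r1 + r2) choose r1)) * bibracket [s1 + s2] [r1 + r2]
      + fps_const (of_nat ((r1 + r2) choose r1)) *
          (\<Sum>j=1..s1. fps_const ((-1) ^ (s2 - 1) * bernoulli (s1 + s2 - j) / fact (s1 + s2 - j)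
                          * of_nat ((s1 + s2 - j - 1) choose (s1 - j)))
                      * bibracket [j] [r1 + r2])
      + fps_const (of_nat ((r1 + r2) choose r1)) *
          (\<Sum>j=1..s2. fps_const ((-1) ^ (s1 - 1) * bernoulli (s1 + s2 - j) / fact (s1 + s2 - j)
                          * of_nat ((s1 + s2 - j - 1) choose (s2 - j)))
                      * bibracket [j] [r1 + r2])
    \<and>
    bibracket [s1] [r1] * bibracket [s2] [r2] =
      (\<Sum>j=1..s1. \<Sum>k=0..r2.
          fps_const (of_nat ((s1 + s2 - j - 1) choose (s1 - j)) * of_nat ((r1 + r2 - k) choose r1)
                     * (-1) ^ (r2 - k))
          * bibracket [s1 + s2 - j, j] [k, r1 + r2 - k])
      + (\<Sum>j=1..s2. \<Sum>k=0..r1.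
          fps_const (of_nat ((s1 + s2 - j - 1) choose (s1 - 1)) * of_nat ((r1 + r2 - k) choose (r1 - k))
                     * (-1) ^ (r1 - k))
          * bibracket [s1 + s2 - j, j] [k, r1 + r2 - k])
      + fps_const (of_nat ((s1 + s2 - 2) choose (s1 - 1))) * bibracket [s1 + s2 - 1] [r1 + r2 + 1]
      + fps_const (of_nat ((s1 + s2 - 2) choose (s1 - 1))) *
          (\<Sum>j=0..r1. fps_const ((-1) ^ r2 * bernoulli (r1 + r2 - j + 1) / fact (r1 + r2 - j + 1)
                          * of_nat ((r1 + r2 - j) choose (r1 - j)))
                      * bibracket [s1 + s2 - 1] [j])
      + fps_const (of_nat ((s1 + s2 - 2) choose (s1 - 1))) *
          (\<Sum>j=0..r2. fps_const ((-1) ^ r1 * bernoulli (r1 + r2 - j + 1) / fact (r1 + r2 - j + 1)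
                          * of_nat ((r1 + r2 - j) choose (r2 - j)))
                      * bibracket [s1 + s2 - 1] [j])"
proof -
  obtain a where a: "s1 = Suc a" using assms(1) by (cases s1) auto
  obtain b where b: "s2 = Suc b" using assms(2) by (cases s2) auto
  have c1: "bibracket [s1] [r1] * bibracket [s2] [r2] =
      bibracket [s1, s2] [r1, r2] + bibracket [s2, s1] [r2, r1]
      + fps_const (of_nat ((r1 + r2) choose r1)) * bibracket [s1 + s2] [r1 + r2]
      + fps_const (of_nat ((r1 + r2) choose r1)) *
          (\<Sum>j=1..s1. fps_const ((-1) ^ (s2 - 1) * bernoulli (s1 + s2 - j) / fact (s1 + s2 - j)
                          * of_nat ((s1 + s2 - j - 1) choose (s1 - j)))
                      * bibracket [j] [r1 + r2])
      + fps_const (of_nat ((r1 + r2) choose r1)) *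
          (\<Sum>j=1..s2. fps_const ((-1) ^ (s1 - 1) * bernoulli (s1 + s2 - j) / fact (s1 + s2 - j)
                          * of_nat ((s1 + s2 - j - 1) choose (s2 - j)))
                      * bibracket [j] [r1 + r2])"
  proof (rule fps_ext)
    fix n
    show "(bibracket [s1] [r1] * bibracket [s2] [r2]) $ n = (bibracket [s1, s2] [r1, r2] + bibracket [s2, s1] [r2, r1]
      + fps_const (of_nat ((r1 + r2) choose r1)) * bibracket [s1 + s2] [r1 + r2]
      + fps_const (of_nat ((r1 + r2) choose r1)) *
          (\<Sum>j=1..s1. fps_const ((-1) ^ (s2 - 1) * bernoulli (s1 + s2 - j) / fact (s1 + s2 - j)
                          * of_nat ((s1 + s2 - j - 1) choose (s1 - j)))
                      * bibracket [j] [r1 + r2])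
      + fps_const (of_nat ((r1 + r2) choose r1)) *
          (\<Sum>j=1..s2. fps_const ((-1) ^ (s1 - 1) * bernoulli (s1 + s2 - j) / fact (s1 + s2 - j)
                          * of_nat ((s1 + s2 - j - 1) choose (s2 - j)))
                      * bibracket [j] [r1 + r2])) $ n"
      unfolding prod_nth a b part_i_coeff fps_add_nth fps_mult_left_const_nth fps_sum_nth shift1
      by (simp add: bb1 bb2 beta_def)
  qed
  have c2: "bibracket [s1] [r1] * bibracket [s2] [r2] =
      (\<Sum>j=1..s1. \<Sum>k=0..r2.
          fps_const (of_nat ((s1 + s2 - j - 1) choose (s1 - j)) * of_nat ((r1 + r2 - k) choose r1)
                     * (-1) ^ (r2 - k))
          * bibracket [s1 + s2 - j, j] [k, r1 + r2 - k])
      + (\<Sum>j=1..s2. \<Sum>k=0..r1.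
          fps_const (of_nat ((s1 + s2 - j - 1) choose (s1 - 1)) * of_nat ((r1 + r2 - k) choose (r1 - k))
                     * (-1) ^ (r1 - k))
          * bibracket [s1 + s2 - j, j] [k, r1 + r2 - k])
      + fps_const (of_nat ((s1 + s2 - 2) choose (s1 - 1))) * bibracket [s1 + s2 - 1] [r1 + r2 + 1]
      + fps_const (of_nat ((s1 + s2 - 2) choose (s1 - 1))) *
          (\<Sum>j=0..r1. fps_const ((-1) ^ r2 * bernoulli (r1 + r2 - j + 1) / fact (r1 + r2 - j + 1)
                          * of_nat ((r1 + r2 - j) choose (r1 - j)))
                      * bibracket [s1 + s2 - 1] [j])
      + fps_const (of_nat ((s1 + s2 - 2) choose (s1 - 1))) *
          (\<Sum>j=0..r2. fps_const ((-1) ^ r1 * bernoulli (r1 + r2 - j + 1) / fact (r1 + r2 - j + 1)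
                          * of_nat ((r1 + r2 - j) choose (r2 - j)))
                      * bibracket [s1 + s2 - 1] [j])"
  proof (rule fps_ext)
    fix n
    show "(bibracket [s1] [r1] * bibracket [s2] [r2]) $ n = ((\<Sum>j=1..s1. \<Sum>k=0..r2.
          fps_const (of_nat ((s1 + s2 - j - 1) choose (s1 - j)) * of_nat ((r1 + r2 - k) choose r1)
                     * (-1) ^ (r2 - k))
          * bibracket [s1 + s2 - j, j] [k, r1 + r2 - k])
      + (\<Sum>j=1..s2. \<Sum>k=0..r1.
          fps_const (of_nat ((s1 + s2 - j - 1) choose (s1 - 1)) * of_nat ((r1 + r2 - k) choose (r1 - k))
                     * (-1) ^ (r1 - k))
          * bibracket [s1 + s2 - j, j] [k, r1 + r2 - k])
      + fps_const (of_nat ((s1 + s2 - 2) choose (s1 - 1))) * bibracket [s1 + s2 - 1] [r1 + r2 + 1]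
      + fps_const (of_nat ((s1 + s2 - 2) choose (s1 - 1))) *
          (\<Sum>j=0..r1. fps_const ((-1) ^ r2 * bernoulli (r1 + r2 - j + 1) / fact (r1 + r2 - j + 1)
                          * of_nat ((r1 + r2 - j) choose (r1 - j)))
                      * bibracket [s1 + s2 - 1] [j])
      + fps_const (of_nat ((s1 + s2 - 2) choose (s1 - 1))) *
          (\<Sum>j=0..r2. fps_const ((-1) ^ r1 * bernoulli (r1 + r2 - j + 1) / fact (r1 + r2 - j + 1)
                          * of_nat ((r1 + r2 - j) choose (r2 - j)))
                      * bibracket [s1 + s2 - 1] [j])) $ n"
      unfolding prod_nth a b part_ii_coeff fps_add_nth fps_mult_left_const_nth fps_sum_nth shift1 atMost_atLeast0[symmetric]
      by (simp add: bb1 bb2 beta_def Suc_diff_le)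
  qed
  from c1 c2 show ?thesis by blast
qed


end
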